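(* Consider the rectangular problem $$\max_{\alpha\in\mathbb{R}^{|\mathcal A|\times|\mathcal T|}}\ \sum_{i\in\mathcal A}\sum_{j\in\mathcal T} w_{ij}\alpha_{ij}\quad\text{s.t.}\quad \sum_{j\in\mathcal T}\alpha_{ij}\le 1\ (\forall i),\ \ \sum_i\alpha_{iP}=1,\ \ \sum_i\alpha_{ij}\le 1\ (\forall j\in\mathcal T\setminus\{P\}),\ \ 0\le\alpha_{ij}\le 1,$$ with $|\mathcal A|>|\mathcal T|$. Let $K=|\mathcal A|-|\mathcal T|$ and introduce $K$ secondary trajectory tasks $P'_1,\dots,P'_K$ with weights $w_{iP'_k}=(d(q_P,x_i)+\epsilon')^{-1}$ for all agents $i$ and all $k$, where $\epsilon'>0$. Consider the augmented square problem over $\tilde\alpha\in\mathbb{R}^{|\mathcal A|\times(|\mathcal T|+K)}$: $$\max\ \sum_{i}\sum_{j\in\mathcal T\cup\{P'_1,\dots,P'_K\}} w_{ij}\tilde\alpha_{ij}\quad\text{s.t. every row sum and every column sum of }\tilde\alpha\text{ equals }1,\ 0\le\tilde\alpha_{ij}\le1.$$ Then there exists $\epsilon'_0>0$ (depending on the agent positions, task locations and $\epsilon$) such that for every $\epsilon'>\epsilon'_0$, the restriction of any optimal solution $\tilde\alpha$ of the augmented problem to the columns indexed by $\mathcal T$ is an optimal solution of the rectangular problem; i.e., introducing the secondary trajectory tasks does not alter the assignment of the trajectory task $P$ and the online tasks.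
   Context: A team consists of a finite set $\mathcal A$ of agents; agent $i$ has position $x_i\in\mathbb{R}^m$. The task set $\mathcal T$ consists of one trajectory task $P$, with location $q_P\in\mathbb{R}^m$ (the next reference waypoint), and online tasks $O_j$ with locations $q_{O_j}\in\mathbb{R}^m$. $d(\cdot,\cdot)$ is Euclidean distance and $\epsilon>0$ is fixed. The weights are $w_{iP}=(d(q_P,x_i)+\epsilon)^{-1}$ and $w_{iO_j}=(d(q_{O_j},x_i)+\epsilon)^{-1}$; in particular $0<w_{ij}\le\epsilon^{-1}$. The variable $\alpha_{ij}$ is the splitting (assignment) coefficient of agent $i$ to task $j$. *)

theory Defs
  imports "HOL-Analysis.Analysis"
begin

definition weight :: "real \<Rightarrow> 'e::metric_space \<Rightarrow> 'e \<Rightarrow> real" where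
  "weight eps qj xi = inverse (dist qj xi + eps)"

definition rect_objective ::
  "real \<Rightarrow> 'a set \<Rightarrow> 't set \<Rightarrow> ('a \<Rightarrow> 'e::metric_space) \<Rightarrow> ('t \<Rightarrow> 'e)
     \<Rightarrow> ('a \<Rightarrow> 't \<Rightarrow> real) \<Rightarrow> real" where
  "rect_objective eps A T x q \<alpha> = (\<Sum>i\<in>A. \<Sum>j\<in>T. weight eps (q j) (x i) * \<alpha> i j)"

definition rect_feasible :: "'a set \<Rightarrow> 't set \<Rightarrow> 't \<Rightarrow> ('a \<Rightarrow> 't \<Rightarrow> real) \<Rightarrow> bool" where
  "rect_feasible A T P \<alpha> \<longleftrightarrow>
     (\<forall>i\<in>A. (\<Sum>j\<in>T. \<alpha> i j) \<le> 1) \<and>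
     (\<Sum>i\<in>A. \<alpha> i P) = 1 \<and>
     (\<forall>j\<in>T - {P}. (\<Sum>i\<in>A. \<alpha> i j) \<le> 1) \<and>
     (\<forall>i\<in>A. \<forall>j\<in>T. 0 \<le> \<alpha> i j \<and> \<alpha> i j \<le> 1)"

definition rect_optimal ::
  "real \<Rightarrow> 'a set \<Rightarrow> 't set \<Rightarrow> 't \<Rightarrow> ('a \<Rightarrow> 'e::metric_space) \<Rightarrow> ('t \<Rightarrow> 'e)
     \<Rightarrow> ('a \<Rightarrow> 't \<Rightarrow> real) \<Rightarrow> bool" where
  "rect_optimal eps A T P x q \<alpha> \<longleftrightarrow>
     rect_feasible A T P \<alpha> \<and>
     (\<forall>\<beta>. rect_feasible A T P \<beta> \<longrightarrow> rect_objective eps A T x q \<beta> \<le> rect_objective eps A T x q \<alpha>)"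

text \<open>Augmented square problem. Columns are Inl j for tasks j in T and
  Inr k (k < K) for the secondary trajectory tasks P'_k.\<close>
definition aug_cols :: "'t set \<Rightarrow> nat \<Rightarrow> ('t + nat) set" where
  "aug_cols T K = Inl ` T \<union> Inr ` {..<K}"

definition aug_weight ::
  "real \<Rightarrow> real \<Rightarrow> 't \<Rightarrow> ('a \<Rightarrow> 'e::metric_space) \<Rightarrow> ('t \<Rightarrow> 'e) \<Rightarrow> 'a \<Rightarrow> 't + nat \<Rightarrow> real" where
  "aug_weight eps eps' P x q i c =
     (case c of Inl j \<Rightarrow> weight eps (q j) (x i) | Inr k \<Rightarrow> weight eps' (q P) (x i))"

definition aug_objective ::
  "real \<Rightarrow> real \<Rightarrow> 'a set \<Rightarrow> 't set \<Rightarrow> 't \<Rightarrow> nat \<Rightarrow> ('a \<Rightarrow> 'e::metric_space) \<Rightarrow> ('t \<Rightarrow> 'e)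
     \<Rightarrow> ('a \<Rightarrow> 't + nat \<Rightarrow> real) \<Rightarrow> real" where
  "aug_objective eps eps' A T P K x q \<alpha> =
     (\<Sum>i\<in>A. \<Sum>c\<in>aug_cols T K. aug_weight eps eps' P x q i c * \<alpha> i c)"

definition aug_feasible :: "'a set \<Rightarrow> 't set \<Rightarrow> nat \<Rightarrow> ('a \<Rightarrow> 't + nat \<Rightarrow> real) \<Rightarrow> bool" where
  "aug_feasible A T K \<alpha> \<longleftrightarrow>
     (\<forall>i\<in>A. (\<Sum>c\<in>aug_cols T K. \<alpha> i c) = 1) \<and>
     (\<forall>c\<in>aug_cols T K. (\<Sum>i\<in>A. \<alpha> i c) = 1) \<and>
     (\<forall>i\<in>A. \<forall>c\<in>aug_cols T K. 0 \<le> \<alpha> i c \<and> \<alpha> i c \<le> 1)"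

definition aug_optimal ::
  "real \<Rightarrow> real \<Rightarrow> 'a set \<Rightarrow> 't set \<Rightarrow> 't \<Rightarrow> nat \<Rightarrow> ('a \<Rightarrow> 'e::metric_space) \<Rightarrow> ('t \<Rightarrow> 'e)
     \<Rightarrow> ('a \<Rightarrow> 't + nat \<Rightarrow> real) \<Rightarrow> bool" where
  "aug_optimal eps eps' A T P K x q \<alpha> \<longleftrightarrow>
     aug_feasible A T K \<alpha> \<and>
     (\<forall>\<beta>. aug_feasible A T K \<beta> \<longrightarrow>
        aug_objective eps eps' A T P K x q \<beta> \<le> aug_objective eps eps' A T P K x q \<alpha>)"

end

theory Submission
  imports Defs "HOL-Library.FuncSet"
begin

lemma hall:
  fixes N :: "'c \<Rightarrow> 'a set"
  assumes "finite C" "\<And>c. c \<in> C \<Longrightarrow> finite (N c)"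
    "\<And>J. J \<subseteq> C \<Longrightarrow> card J \<le> card (\<Union>(N ` J))"
  shows "\<exists>f. inj_on f C \<and> (\<forall>c\<in>C. f c \<in> N c)"
  using assms
proof (induction "card C" arbitrary: C N rule: less_induct)
  case less
  show ?case
  proof (cases "C = {}")
    case True then show ?thesis by auto
  next
    case Cne: False
    show ?thesis
    proof (cases "\<exists>J. J \<subseteq> C \<and> J \<noteq> {} \<and> J \<noteq> C \<and> card (\<Union>(N ` J)) = card J")
      case True
      then obtain J where J: "J \<subseteq> C" "J \<noteq> {}" "J \<noteq> C" "card (\<Union>(N ` J)) = card J" by blast
      have fJ: "finite J" using J less.prems(1) finite_subset by blast
      have "card J < card C" using J less.prems(1) by (meson psubsetI psubset_card_mono)
      moreover have "\<And>J'. J' \<subseteq> J \<Longrightarrow> card J' \<le> card (\<Union>(N ` J'))"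
        using less.prems(3) J(1) by blast
      ultimately obtain f1 where f1: "inj_on f1 J" "\<forall>c\<in>J. f1 c \<in> N c"
        using less.hyps[of J N] fJ less.prems(2) J(1) by blast
      define C2 where "C2 = C - J"
      define N2 where "N2 = (\<lambda>c. N c - \<Union>(N ` J))"
      have fC2: "finite C2" using less.prems(1) C2_def by simp
      have "card C2 < card C" unfolding C2_def using J less.prems(1)
        by (metis Diff_subset card_Diff_subset card_gt_0_iff diff_less fJ finite_subset subset_empty)
      moreover have "\<And>J'. J' \<subseteq> C2 \<Longrightarrow> card J' \<le> card (\<Union>(N2 ` J'))"
      proof -
        fix J' assume J': "J' \<subseteq> C2"
        have eq: "\<Union>(N2 ` J') = \<Union>(N ` (J' \<union> J)) - \<Union>(N ` J)" by (auto simp: N2_def)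
        have fJJ: "finite (J' \<union> J)" using J' fC2 fJ finite_subset by blast
        have fin: "finite (\<Union>(N ` (J' \<union> J)))" using fJJ less.prems(2) J(1) J' C2_def by auto
        have sub: "\<Union>(N ` J) \<subseteq> \<Union>(N ` (J' \<union> J))" by auto
        have "card (\<Union>(N2 ` J')) = card (\<Union>(N ` (J' \<union> J))) - card (\<Union>(N ` J))"
          using eq card_Diff_subset[OF finite_subset[OF sub fin] sub] by simp
        moreover have "card (J' \<union> J) \<le> card (\<Union>(N ` (J' \<union> J)))"
          using less.prems(3)[of "J' \<union> J"] J(1) J' C2_def by blast
        moreover have "card (J' \<union> J) = card J' + card J"
          using J' C2_def fJJ by (subst card_Un_disjoint) auto
        ultimately show "card J' \<le> card (\<Union>(N2 ` J'))" using J(4) by linarith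
      qed
      ultimately obtain f2 where f2: "inj_on f2 C2" "\<forall>c\<in>C2. f2 c \<in> N2 c"
        using less.hyps[of C2 N2] fC2 less.prems(2) C2_def N2_def by auto
      define f where "f = (\<lambda>c. if c \<in> J then f1 c else f2 c)"
      have "inj_on f C"
        unfolding inj_on_def
      proof (intro ballI impI)
        fix c c' assume c: "c \<in> C" "c' \<in> C" "f c = f c'"
        show "c = c'"
        proof (cases "c \<in> J"; cases "c' \<in> J")
          assume "c \<in> J" "c' \<in> J" then show ?thesis using c f1(1) f_def by (auto dest: inj_onD)
        next
          assume a: "c \<in> J" "c' \<notin> J"
          have "f c \<in> \<Union>(N ` J)" using a f1 f_def by auto
          moreover have "f c' \<notin> \<Union>(N ` J)" using a f2 c(1,2) f_def C2_def N2_def by auto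
          ultimately show ?thesis using c by simp
        next
          assume a: "c \<notin> J" "c' \<in> J"
          have "f c' \<in> \<Union>(N ` J)" using a f1 f_def by auto
          moreover have "f c \<notin> \<Union>(N ` J)" using a f2 c(1,2) f_def C2_def N2_def by auto
          ultimately show ?thesis using c by simp
        next
          assume "c \<notin> J" "c' \<notin> J" then show ?thesis using c f2(1) f_def C2_def
            by (auto dest: inj_onD)
        qed
      qed
      moreover have "\<forall>c\<in>C. f c \<in> N c" using f1 f2 f_def C2_def N2_def by auto
      ultimately show ?thesis by blast
    next
      case False
      then have big: "\<And>J. J \<subseteq> C \<Longrightarrow> J \<noteq> {} \<Longrightarrow> J \<noteq> C \<Longrightarrow> card J + 1 \<le> card (\<Union>(N ` J))"
        using less.prems(3) by (metis Suc_eq_plus1 Suc_leI le_neq_implies_less)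
      obtain c0 where c0: "c0 \<in> C" using Cne by blast
      have "card {c0} \<le> card (\<Union>(N ` {c0}))" using less.prems(3) c0 by blast
      then have "N c0 \<noteq> {}" by auto
      then obtain a where a: "a \<in> N c0" by blast
      define C1 where "C1 = C - {c0}"
      define N1 where "N1 = (\<lambda>c. N c - {a})"
      have fC1: "finite C1" using less.prems(1) C1_def by simp
      have "card C1 < card C" unfolding C1_def using c0 less.prems(1)
        by (metis card_Diff1_less)
      moreover have "\<And>J. J \<subseteq> C1 \<Longrightarrow> card J \<le> card (\<Union>(N1 ` J))"
      proof -
        fix J assume J: "J \<subseteq> C1"
        show "card J \<le> card (\<Union>(N1 ` J))"
        proof (cases "J = {}")
          case True then show ?thesis by simp
        next
          case False
          have "J \<noteq> C" using J c0 C1_def by auto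
          then have h: "card J + 1 \<le> card (\<Union>(N ` J))" using big[of J] J C1_def False by auto
          have eq: "\<Union>(N1 ` J) = \<Union>(N ` J) - {a}" by (auto simp: N1_def)
          have "card (\<Union>(N ` J)) - 1 \<le> card (\<Union>(N ` J) - {a})"
            using diff_card_le_card_Diff[of "{a}" "\<Union>(N ` J)"] by simp
          then show ?thesis using h unfolding eq by linarith
        qed
      qed
      ultimately obtain f1 where f1: "inj_on f1 C1" "\<forall>c\<in>C1. f1 c \<in> N1 c"
        using less.hyps[of C1 N1] fC1 less.prems(2) C1_def N1_def by auto
      define f where "f = f1(c0 := a)"
      have "inj_on f C" unfolding f_def using f1 C1_def N1_def c0
        by (auto simp: inj_on_def)
      moreover have "\<forall>c\<in>C. f c \<in> N c" using f1 a C1_def N1_def f_def by auto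
      ultimately show ?thesis by blast
    qed
  qed
qed


definition bijs :: "'c set \<Rightarrow> 'a set \<Rightarrow> ('c \<Rightarrow> 'a) set" where
  "bijs C A = {g \<in> C \<rightarrow>\<^sub>E A. bij_betw g C A}"

lemma finite_bijs: "finite A \<Longrightarrow> finite C \<Longrightarrow> finite (bijs C A)"
  unfolding bijs_def by (rule finite_subset[OF _ finite_PiE]) auto

lemma birkhoff:
  fixes \<beta> :: "'a \<Rightarrow> 'c \<Rightarrow> real"
  assumes fA: "finite A" and fC: "finite C" and cAC: "card A = card C"
    and "\<forall>i\<in>A. \<forall>c\<in>C. \<beta> i c \<ge> 0" "\<forall>i\<in>A. (\<Sum>c\<in>C. \<beta> i c) = t" "\<forall>c\<in>C. (\<Sum>i\<in>A. \<beta> i c) = t"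
  shows "\<exists>\<mu>. (\<forall>g\<in>bijs C A. \<mu> g \<ge> 0) \<and>
     (\<forall>i\<in>A. \<forall>c\<in>C. \<beta> i c = (\<Sum>g\<in>bijs C A. \<mu> g * (if g c = i then 1 else 0)))"
  using assms(4-6)
proof (induction "card {p\<in>A\<times>C. \<beta> (fst p) (snd p) \<noteq> 0}" arbitrary: \<beta> t rule: less_induct)
  case less
  have fB: "finite (bijs C A)" using fA fC by (rule finite_bijs)
  show ?case
  proof (cases "C = {} \<or> t \<le> 0")
    case True
    have z: "\<forall>i\<in>A. \<forall>c\<in>C. \<beta> i c = 0"
    proof (intro ballI)
      fix i c assume ic: "i \<in> A" "c \<in> C"
      then have "t \<le> 0" using True by auto
      then have "(\<Sum>i\<in>A. \<beta> i c) \<le> 0" using less.prems(3) ic by auto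
      then show "\<beta> i c = 0" using sum_nonneg_eq_0_iff[OF fA, of "\<lambda>i. \<beta> i c"] less.prems(1) ic
        by (smt (verit) sum_nonneg)
    qed
    show ?thesis by (rule exI[of _ "\<lambda>_. 0"]) (simp add: z)
  next
    case False
    then have Cne: "C \<noteq> {}" and tpos: "t > 0" by auto
    define N where "N = (\<lambda>c. {i\<in>A. \<beta> i c > 0})"
    have "\<exists>f. inj_on f C \<and> (\<forall>c\<in>C. f c \<in> N c)"
    proof (rule hall[OF fC])
      show "\<And>c. c \<in> C \<Longrightarrow> finite (N c)" using fA N_def by auto
    next
      fix J assume J: "J \<subseteq> C"
      define U where "U = \<Union>(N ` J)"
      have UA: "U \<subseteq> A" using U_def N_def by auto
      have fJ: "finite J" using J fC finite_subset by blast
      have fU: "finite U" using UA fA finite_subset by blast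
      have "t * card J = (\<Sum>c\<in>J. t)" by simp
      also have "\<dots> = (\<Sum>c\<in>J. \<Sum>i\<in>A. \<beta> i c)" using less.prems(3) J by (intro sum.cong) auto
      also have "\<dots> = (\<Sum>c\<in>J. \<Sum>i\<in>U. \<beta> i c)"
      proof (rule sum.cong[OF refl])
        fix c assume c: "c \<in> J"
        show "(\<Sum>i\<in>A. \<beta> i c) = (\<Sum>i\<in>U. \<beta> i c)"
        proof (rule sum.mono_neutral_right[OF fA UA])
          show "\<forall>i\<in>A - U. \<beta> i c = 0"
          proof
            fix i assume i: "i \<in> A - U"
            then have "\<not> \<beta> i c > 0" using c U_def N_def by auto
            moreover have "\<beta> i c \<ge> 0" using less.prems(1) i c J by auto
            ultimately show "\<beta> i c = 0" by linarith
          qed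
        qed
      qed
      also have "\<dots> = (\<Sum>i\<in>U. \<Sum>c\<in>J. \<beta> i c)" by (rule sum.swap)
      also have "\<dots> \<le> (\<Sum>i\<in>U. \<Sum>c\<in>C. \<beta> i c)"
        by (rule sum_mono, rule sum_mono2[OF fC J]) (use less.prems(1) UA J in auto)
      also have "\<dots> = (\<Sum>i\<in>U. t)" using less.prems(2) UA by (intro sum.cong) auto
      also have "\<dots> = t * card U" by simp
      finally show "card J \<le> card (\<Union>(N ` J))" using tpos U_def by simp
    qed
    then obtain f where f: "inj_on f C" "\<forall>c\<in>C. f c \<in> N c" by blast
    define g where "g = restrict f C"
    have fCsub: "f ` C \<subseteq> A" using f(2) N_def by auto
    have fCA: "f ` C = A"
    proof (rule card_subset_eq[OF fA fCsub])
      show "card (f ` C) = card A" using card_image[OF f(1)] cAC by simp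
    qed
    have bf: "bij_betw f C A" using f(1) fCA by (rule bij_betw_imageI)
    have bg: "bij_betw g C A" unfolding g_def
      using bf bij_betw_cong[of C f "restrict f C" A] by (metis restrict_apply')
    have gPi: "g \<in> C \<rightarrow>\<^sub>E A" unfolding g_def using fCsub by auto
    have gB: "g \<in> bijs C A" unfolding bijs_def using bg gPi by blast
    have gpos: "\<forall>c\<in>C. \<beta> (g c) c > 0" using f g_def N_def by auto
    define l where "l = Min ((\<lambda>c. \<beta> (g c) c) ` C)"
    have lin: "l \<in> (\<lambda>c. \<beta> (g c) c) ` C" unfolding l_def using fC Cne by (intro Min_in) auto
    then obtain c0 where c0: "c0 \<in> C" "\<beta> (g c0) c0 = l" by auto
    have lpos: "l > 0" using c0 gpos by auto
    have lle: "\<forall>c\<in>C. l \<le> \<beta> (g c) c" unfolding l_def using fC by auto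
    define \<beta>' where "\<beta>' = (\<lambda>i c. \<beta> i c - l * (if g c = i then 1 else 0))"
    have rowg: "\<forall>i\<in>A. (\<Sum>c\<in>C. (if g c = i then 1 else 0::real)) = 1"
    proof
      fix i assume i: "i \<in> A"
      have "(\<Sum>c\<in>C. (if g c = i then 1 else 0::real)) = (\<Sum>i'\<in>A. (if i' = i then 1 else 0))"
        by (rule sum.reindex_bij_betw[OF bg])
      also have "\<dots> = 1" using i fA by simp
      finally show "(\<Sum>c\<in>C. (if g c = i then 1 else 0::real)) = 1" .
    qed
    have colg: "\<forall>c\<in>C. (\<Sum>i\<in>A. (if g c = i then 1 else 0::real)) = 1"
      using bg fA bij_betwE by (fastforce simp: sum.delta)
    have p1: "\<forall>i\<in>A. \<forall>c\<in>C. \<beta>' i c \<ge> 0" using less.prems(1) lle \<beta>'_def by auto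
    have p2: "\<forall>i\<in>A. (\<Sum>c\<in>C. \<beta>' i c) = t - l"
      using less.prems(2) rowg by (simp add: \<beta>'_def sum_subtractf flip: sum_distrib_left)
    have p3: "\<forall>c\<in>C. (\<Sum>i\<in>A. \<beta>' i c) = t - l"
      using less.prems(3) colg by (simp add: \<beta>'_def sum_subtractf flip: sum_distrib_left)
    have sub: "{p\<in>A\<times>C. \<beta>' (fst p) (snd p) \<noteq> 0} \<subset> {p\<in>A\<times>C. \<beta> (fst p) (snd p) \<noteq> 0}"
    proof
      show "{p\<in>A\<times>C. \<beta>' (fst p) (snd p) \<noteq> 0} \<subseteq> {p\<in>A\<times>C. \<beta> (fst p) (snd p) \<noteq> 0}"
        using gpos \<beta>'_def by auto
      have "(g c0, c0) \<in> {p\<in>A\<times>C. \<beta> (fst p) (snd p) \<noteq> 0}"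
        using c0 gpos bg bij_betwE by fastforce
      moreover have "(g c0, c0) \<notin> {p\<in>A\<times>C. \<beta>' (fst p) (snd p) \<noteq> 0}"
        using c0 \<beta>'_def by auto
      ultimately show "{p\<in>A\<times>C. \<beta>' (fst p) (snd p) \<noteq> 0} \<noteq> {p\<in>A\<times>C. \<beta> (fst p) (snd p) \<noteq> 0}"
        by blast
    qed
    have "card {p\<in>A\<times>C. \<beta>' (fst p) (snd p) \<noteq> 0} < card {p\<in>A\<times>C. \<beta> (fst p) (snd p) \<noteq> 0}"
      by (rule psubset_card_mono[OF _ sub]) (use fA fC in auto)
    from less.hyps[OF this p1 p2 p3] obtain \<mu>' where
      mu': "\<forall>g\<in>bijs C A. \<mu>' g \<ge> 0"
      "\<forall>i\<in>A. \<forall>c\<in>C. \<beta>' i c = (\<Sum>g\<in>bijs C A. \<mu>' g * (if g c = i then 1 else 0))" by blast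
    define \<mu> where "\<mu> = (\<lambda>h. \<mu>' h + (if h = g then l else 0))"
    show ?thesis
    proof (intro exI[of _ \<mu>] conjI ballI)
      fix h assume "h \<in> bijs C A" then show "\<mu> h \<ge> 0" using mu' lpos \<mu>_def by auto
    next
      fix i c assume ic: "i \<in> A" "c \<in> C"
      have "(\<Sum>h\<in>bijs C A. \<mu> h * (if h c = i then 1 else 0))
          = (\<Sum>h\<in>bijs C A. \<mu>' h * (if h c = i then 1 else 0))
            + (\<Sum>h\<in>bijs C A. (if h = g then l * (if h c = i then 1 else 0) else 0))"
        unfolding \<mu>_def by (subst sum.distrib[symmetric], intro sum.cong) (auto simp: algebra_simps)
      also have "\<dots> = \<beta>' i c + l * (if g c = i then 1 else 0)"
        using mu'(2) ic gB fB by (simp add: sum.delta')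
      also have "\<dots> = \<beta> i c" using \<beta>'_def by simp
      finally show "\<beta> i c = (\<Sum>h\<in>bijs C A. \<mu> h * (if h c = i then 1 else 0))" by simp
    qed
  qed
qed


lemma sum_aug_cols:
  assumes "finite T"
  shows "(\<Sum>c\<in>aug_cols T K. f c) = (\<Sum>j\<in>T. f (Inl j)) + (\<Sum>k<K. f (Inr k))"
proof -
  have "(\<Sum>c\<in>aug_cols T K. f c) = (\<Sum>c\<in>Inl ` T. f c) + (\<Sum>c\<in>Inr ` {..<K}. f c)"
    unfolding aug_cols_def by (rule sum.union_disjoint) (use assms in auto)
  also have "\<dots> = (\<Sum>j\<in>T. f (Inl j)) + (\<Sum>k<K. f (Inr k))"
    by (simp add: sum.reindex)
  finally show ?thesis .
qed

lemma card_aug_cols: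
  assumes "finite T"
  shows "card (aug_cols T K) = card T + K"
proof -
  have "card (aug_cols T K) = card (Inl ` T :: ('a + nat) set) + card (Inr ` {..<K} :: ('a + nat) set)"
    unfolding aug_cols_def by (rule card_Un_disjoint) (use assms in auto)
  also have "\<dots> = card T + K" by (simp add: card_image)
  finally show ?thesis .
qed

lemma finite_aug_cols: "finite T \<Longrightarrow> finite (aug_cols T K)"
  unfolding aug_cols_def by auto

lemma lin_sum:
  fixes w :: "'a \<Rightarrow> 'c \<Rightarrow> real"
  assumes "finite A" "finite C" "finite B"
    "\<forall>i\<in>A. \<forall>c\<in>C. \<alpha> i c = (\<Sum>g\<in>B. \<mu> g * M g i c)"
  shows "(\<Sum>i\<in>A. \<Sum>c\<in>C. w i c * \<alpha> i c) = (\<Sum>g\<in>B. \<mu> g * (\<Sum>i\<in>A. \<Sum>c\<in>C. w i c * M g i c))"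
proof -
  have "(\<Sum>i\<in>A. \<Sum>c\<in>C. w i c * \<alpha> i c) = (\<Sum>i\<in>A. \<Sum>c\<in>C. \<Sum>g\<in>B. \<mu> g * (w i c * M g i c))"
    using assms(4) by (intro sum.cong refl) (simp add: sum_distrib_left algebra_simps)
  also have "\<dots> = (\<Sum>i\<in>A. \<Sum>g\<in>B. \<Sum>c\<in>C. \<mu> g * (w i c * M g i c))"
    by (intro sum.cong refl) (rule sum.swap)
  also have "\<dots> = (\<Sum>g\<in>B. \<Sum>i\<in>A. \<Sum>c\<in>C. \<mu> g * (w i c * M g i c))"
    by (rule sum.swap)
  also have "\<dots> = (\<Sum>g\<in>B. \<mu> g * (\<Sum>i\<in>A. \<Sum>c\<in>C. w i c * M g i c))"
    by (simp add: sum_distrib_left)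
  finally show ?thesis .
qed


theorem mainTheorem3:
  fixes A :: "'a set" and T :: "'t set" and P :: 't
    and x :: "'a \<Rightarrow> real ^ 'm" and q :: "'t \<Rightarrow> real ^ 'm" and eps :: real
  assumes "finite A" and "finite T" and "P \<in> T" and "eps > 0"
    and "card A > card T"
  shows "\<exists>eps0 > 0. \<forall>eps' > eps0. \<forall>\<alpha>.
           aug_optimal eps eps' A T P (card A - card T) x q \<alpha> \<longrightarrow>
           rect_optimal eps A T P x q (\<lambda>i j. \<alpha> i (Inl j))"
proof -
  note fA = assms(1) and fT = assms(2) and PT = assms(3) and epos = assms(4) and cAT = assms(5)
  define K where "K = card A - card T"
  define C where "C = aug_cols T K"
  have Kpos: "K \<ge> 1" using cAT K_def by simp
  have fC: "finite C" using fT C_def finite_aug_cols by blast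
  have cC: "card A = card C" using card_aug_cols[OF fT] cAT C_def K_def by simp
  have inlC: "\<forall>j\<in>T. Inl j \<in> C" using C_def aug_cols_def by auto
  have PC: "Inl P \<in> C" using PT C_def aug_cols_def by auto
  define M :: "('t + nat \<Rightarrow> 'a) \<Rightarrow> 'a \<Rightarrow> 't + nat \<Rightarrow> real"
    where "M = (\<lambda>g i c. if g c = i then 1 else 0)"
  define B where "B = bijs C A"
  have fB: "finite B" using B_def finite_bijs fA fC by blast
  obtain h where h: "bij_betw h C A" using finite_same_card_bij[OF fC fA] cC by auto
  have "restrict h C \<in> B" unfolding B_def bijs_def
    using h bij_betw_cong[of C h "restrict h C" A] bij_betwE[OF h] by (auto simp del: restrict_apply)
  then have Bne: "B \<noteq> {}" by blast
  have Mfeas: "aug_feasible A T K (M g)" if g: "g \<in> B" for g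
  proof -
    have bg: "bij_betw g C A" using g B_def bijs_def by auto
    have row: "(\<Sum>c\<in>C. M g i c) = 1" if i: "i \<in> A" for i
    proof -
      have "(\<Sum>c\<in>C. (if g c = i then 1 else 0::real)) = (\<Sum>i'\<in>A. (if i' = i then 1 else 0))"
        by (rule sum.reindex_bij_betw[OF bg])
      also have "\<dots> = 1" using i fA by simp
      finally show ?thesis unfolding M_def .
    qed
    have col: "(\<Sum>i\<in>A. M g i c) = 1" if c: "c \<in> C" for c
    proof -
      have "g c \<in> A" using bij_betwE[OF bg] c by blast
      then show ?thesis unfolding M_def using fA by (simp add: sum.delta)
    qed
    show ?thesis unfolding aug_feasible_def using row col C_def M_def by auto
  qed
  define Rg where "Rg = (\<lambda>g. rect_objective eps A T x q (\<lambda>i j. M g i (Inl j)))"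
  define opt where "opt = Max (Rg ` B)"
  have Rg_le: "\<forall>g\<in>B. Rg g \<le> opt" unfolding opt_def using fB by auto
  have "opt \<in> Rg ` B" unfolding opt_def using fB Bne by (intro Max_in) auto
  then obtain gs where gs: "gs \<in> B" "Rg gs = opt" by auto
  define Bs where "Bs = {g\<in>B. Rg g < opt}"
  define gap where "gap = (if Bs = {} then 1 else Min ((\<lambda>g. opt - Rg g) ` Bs))"
  have fBs: "finite Bs" using fB Bs_def by simp
  have gappos: "gap > 0"
  proof (cases "Bs = {}")
    case True then show ?thesis using gap_def by simp
  next
    case False
    then have "Min ((\<lambda>g. opt - Rg g) ` Bs) \<in> (\<lambda>g. opt - Rg g) ` Bs" using fBs by (intro Min_in) auto
    then show ?thesis using gap_def False Bs_def by auto
  qed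
  have gapb: "Rg g \<le> opt - gap" if "g \<in> B" "Rg g < opt" for g
  proof -
    have gB: "g \<in> Bs" using that Bs_def by simp
    then have "gap \<le> opt - Rg g" using gap_def fBs by auto
    then show ?thesis by simp
  qed
  define eps0 where "eps0 = real (card A) / gap + 1"
  have eps0pos: "eps0 > 0" unfolding eps0_def
  proof -
    have "real (card A) / gap \<ge> 0" using gappos by simp
    then show "real (card A) / gap + 1 > 0" by linarith
  qed
  show ?thesis
  proof (intro exI[of _ eps0] conjI allI impI eps0pos)
    fix eps' :: real and \<alpha> :: "'a \<Rightarrow> 't + nat \<Rightarrow> real"
    assume eps': "eps' > eps0"
    assume aopt: "aug_optimal eps eps' A T P (card A - card T) x q \<alpha>"
    have eps'pos: "eps' > 0" using eps' eps0pos by linarith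
    have cAlt: "real (card A) < gap * eps'"
    proof -
      have "real (card A) / gap < eps'" using eps' eps0_def by simp
      then show ?thesis using gappos by (simp add: divide_less_eq mult.commute)
    qed
    define w' where "w' = (\<lambda>i. weight eps' (q P) (x i))"
    have w'pos: "w' i > 0" for i unfolding w'_def weight_def using eps'pos
      by (simp add: add_nonneg_pos)
    have w'le: "w' i \<le> 1 / eps'" for i unfolding w'_def weight_def using eps'pos
      by (simp add: inverse_eq_divide frac_le)
    define AO where "AO = aug_objective eps eps' A T P K x q"
    define RO where "RO = rect_objective eps A T x q"
    have split: "AO \<beta> = RO (\<lambda>i j. \<beta> i (Inl j)) + (\<Sum>i\<in>A. w' i * (\<Sum>k<K. \<beta> i (Inr k)))" for \<beta>
      unfolding AO_def RO_def aug_objective_def rect_objective_def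
      by (simp add: sum_aug_cols[OF fT] sum.distrib aug_weight_def w'_def sum_distrib_left)
    have pert: "0 \<le> (\<Sum>i\<in>A. w' i * (\<Sum>k<K. \<beta> i (Inr k))) \<and> (\<Sum>i\<in>A. w' i * (\<Sum>k<K. \<beta> i (Inr k))) < gap"
      if bf: "aug_feasible A T K \<beta>" for \<beta>
    proof -
      have s01: "0 \<le> (\<Sum>k<K. \<beta> i (Inr k)) \<and> (\<Sum>k<K. \<beta> i (Inr k)) \<le> 1" if i: "i \<in> A" for i
      proof -
        have r: "(\<Sum>j\<in>T. \<beta> i (Inl j)) + (\<Sum>k<K. \<beta> i (Inr k)) = 1"
          using bf i unfolding aug_feasible_def by (simp add: sum_aug_cols[OF fT])
        have "0 \<le> (\<Sum>j\<in>T. \<beta> i (Inl j))"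
          using bf i unfolding aug_feasible_def aug_cols_def by (intro sum_nonneg) auto
        moreover have "0 \<le> (\<Sum>k<K. \<beta> i (Inr k))"
          using bf i unfolding aug_feasible_def aug_cols_def by (intro sum_nonneg) auto
        ultimately show ?thesis using r by linarith
      qed
      have "0 \<le> (\<Sum>i\<in>A. w' i * (\<Sum>k<K. \<beta> i (Inr k)))"
        using s01 w'pos by (intro sum_nonneg) (simp add: less_imp_le)
      moreover have "(\<Sum>i\<in>A. w' i * (\<Sum>k<K. \<beta> i (Inr k))) \<le> (\<Sum>i\<in>A. 1 / eps')"
      proof (rule sum_mono)
        fix i assume i: "i \<in> A"
        have "w' i * (\<Sum>k<K. \<beta> i (Inr k)) \<le> w' i * 1"
          using s01[OF i] w'pos by (intro mult_left_mono) (auto simp: less_imp_le)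
        then show "w' i * (\<Sum>k<K. \<beta> i (Inr k)) \<le> 1 / eps'" using w'le[of i] by simp
      qed
      moreover have "(\<Sum>i\<in>A. 1 / eps') < gap"
        using cAlt eps'pos by (simp add: divide_less_eq mult.commute)
      ultimately show ?thesis by linarith
    qed
    have decomp: "\<exists>\<mu>. (\<forall>g\<in>B. \<mu> g \<ge> 0) \<and> (\<Sum>g\<in>B. \<mu> g) = 1 \<and>
        AO \<beta> = (\<Sum>g\<in>B. \<mu> g * AO (M g)) \<and>
        RO (\<lambda>i j. \<beta> i (Inl j)) = (\<Sum>g\<in>B. \<mu> g * Rg g)"
      if bf: "aug_feasible A T K \<beta>" for \<beta>
    proof -
      have "\<exists>\<mu>. (\<forall>g\<in>bijs C A. \<mu> g \<ge> 0) \<and>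
         (\<forall>i\<in>A. \<forall>c\<in>C. \<beta> i c = (\<Sum>g\<in>bijs C A. \<mu> g * (if g c = i then 1 else 0)))"
        by (rule birkhoff[OF fA fC cC, of \<beta> 1]) (use bf in \<open>auto simp: aug_feasible_def C_def\<close>)
      then obtain \<mu> where mu: "\<forall>g\<in>B. \<mu> g \<ge> 0" "\<forall>i\<in>A. \<forall>c\<in>C. \<beta> i c = (\<Sum>g\<in>B. \<mu> g * M g i c)"
        unfolding B_def M_def by blast
      have "(\<Sum>i\<in>A. \<Sum>c\<in>{Inl P}. 1 * \<beta> i c) = (\<Sum>g\<in>B. \<mu> g * (\<Sum>i\<in>A. \<Sum>c\<in>{Inl P}. 1 * M g i c))"
        by (rule lin_sum[OF fA _ fB]) (use mu PC in auto)
      moreover have "(\<Sum>i\<in>A. \<beta> i (Inl P)) = 1" using bf PC C_def unfolding aug_feasible_def by auto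
      moreover have "\<forall>g\<in>B. (\<Sum>i\<in>A. M g i (Inl P)) = 1"
        using Mfeas PC C_def unfolding aug_feasible_def by auto
      ultimately have s1: "(\<Sum>g\<in>B. \<mu> g) = 1" by simp
      have a: "AO \<beta> = (\<Sum>g\<in>B. \<mu> g * AO (M g))"
        unfolding AO_def aug_objective_def C_def[symmetric]
        by (rule lin_sum[OF fA fC fB mu(2)])
      have r: "RO (\<lambda>i j. \<beta> i (Inl j)) = (\<Sum>g\<in>B. \<mu> g * Rg g)"
        unfolding RO_def Rg_def rect_objective_def
        by (rule lin_sum[OF fA fT fB]) (use mu(2) inlC in blast)
      show ?thesis using mu(1) s1 a r by blast
    qed
    have vbound: "RO (\<lambda>i j. \<beta> i (Inl j)) \<le> opt" if bf: "aug_feasible A T K \<beta>" for \<beta>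
    proof -
      obtain \<mu> where mu: "\<forall>g\<in>B. \<mu> g \<ge> 0" "(\<Sum>g\<in>B. \<mu> g) = 1"
        "RO (\<lambda>i j. \<beta> i (Inl j)) = (\<Sum>g\<in>B. \<mu> g * Rg g)" using decomp[OF bf] by blast
      have "(\<Sum>g\<in>B. \<mu> g * Rg g) \<le> (\<Sum>g\<in>B. \<mu> g * opt)"
        using mu(1) Rg_le by (intro sum_mono mult_left_mono) auto
      also have "\<dots> = opt" using mu(2) by (simp add: sum_distrib_right[symmetric])
      finally show ?thesis using mu(3) by simp
    qed
    have afeas: "aug_feasible A T K \<alpha>" and aopt': "\<forall>\<beta>. aug_feasible A T K \<beta> \<longrightarrow> AO \<beta> \<le> AO \<alpha>"
      using aopt unfolding aug_optimal_def AO_def K_def by auto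
    have Ropt: "RO (\<lambda>i j. \<alpha> i (Inl j)) = opt"
    proof -
      obtain \<mu> where mu: "\<forall>g\<in>B. \<mu> g \<ge> 0" "(\<Sum>g\<in>B. \<mu> g) = 1"
        "AO \<alpha> = (\<Sum>g\<in>B. \<mu> g * AO (M g))"
        "RO (\<lambda>i j. \<alpha> i (Inl j)) = (\<Sum>g\<in>B. \<mu> g * Rg g)" using decomp[OF afeas] by blast
      have good: "Rg g = opt" if g: "g \<in> B" "\<mu> g > 0" for g
      proof (rule ccontr)
        assume "Rg g \<noteq> opt"
        then have "Rg g < opt" using Rg_le g by force
        then have lo: "Rg g \<le> opt - gap" using gapb g by blast
        have "AO (M g) = Rg g + (\<Sum>i\<in>A. w' i * (\<Sum>k<K. M g i (Inr k)))"
          using split Rg_def RO_def by simp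
        then have lt: "AO (M g) < opt" using pert[OF Mfeas[OF g(1)]] lo by linarith
        have "AO (M gs) \<ge> opt"
          using split[of "M gs"] pert[OF Mfeas[OF gs(1)]] gs Rg_def RO_def by simp
        moreover have "AO (M gs) \<le> AO \<alpha>" using aopt' Mfeas[OF gs(1)] by blast
        ultimately have lt2: "AO (M g) < AO \<alpha>" using lt by linarith
        have "(\<Sum>h\<in>B. \<mu> h * AO (M h)) < (\<Sum>h\<in>B. \<mu> h * AO \<alpha>)"
        proof (rule sum_strict_mono_ex1[OF fB])
          show "\<forall>h\<in>B. \<mu> h * AO (M h) \<le> \<mu> h * AO \<alpha>"
            using mu(1) aopt' Mfeas by (auto intro: mult_left_mono)
          show "\<exists>h\<in>B. \<mu> h * AO (M h) < \<mu> h * AO \<alpha>"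
            using g lt2 by (intro bexI[of _ g]) (auto intro: mult_strict_left_mono)
        qed
        also have "\<dots> = AO \<alpha>" using mu(2) by (simp add: sum_distrib_right[symmetric])
        finally show False using mu(3) by simp
      qed
      have "(\<Sum>g\<in>B. \<mu> g * Rg g) = (\<Sum>g\<in>B. \<mu> g * opt)"
      proof (rule sum.cong[OF refl])
        fix g assume g: "g \<in> B"
        show "\<mu> g * Rg g = \<mu> g * opt"
        proof (cases "\<mu> g > 0")
          case True then show ?thesis using good g by simp
        next
          case False then have "\<mu> g = 0" using mu(1) g by force
          then show ?thesis by simp
        qed
      qed
      also have "\<dots> = opt" using mu(2) by (simp add: sum_distrib_right[symmetric])
      finally show ?thesis using mu(4) by simp
    qed
    have rfeas: "rect_feasible A T P (\<lambda>i j. \<alpha> i (Inl j))"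
    proof -
      have rows: "\<forall>i\<in>A. (\<Sum>j\<in>T. \<alpha> i (Inl j)) \<le> 1"
      proof
        fix i assume i: "i \<in> A"
        have r: "(\<Sum>j\<in>T. \<alpha> i (Inl j)) + (\<Sum>k<K. \<alpha> i (Inr k)) = 1"
          using afeas i unfolding aug_feasible_def by (simp add: sum_aug_cols[OF fT])
        have "0 \<le> (\<Sum>k<K. \<alpha> i (Inr k))"
          using afeas i unfolding aug_feasible_def aug_cols_def by (intro sum_nonneg) auto
        then show "(\<Sum>j\<in>T. \<alpha> i (Inl j)) \<le> 1" using r by linarith
      qed
      have cols: "\<forall>j\<in>T. (\<Sum>i\<in>A. \<alpha> i (Inl j)) = 1"
        using afeas inlC unfolding aug_feasible_def C_def by blast
      have ent: "\<forall>i\<in>A. \<forall>j\<in>T. 0 \<le> \<alpha> i (Inl j) \<and> \<alpha> i (Inl j) \<le> 1"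
        using afeas inlC unfolding aug_feasible_def C_def by blast
      show ?thesis unfolding rect_feasible_def using rows cols ent PT by auto
    qed
    have rbound: "RO \<beta> \<le> opt" if bf: "rect_feasible A T P \<beta>" for \<beta>
    proof -
      have rr: "\<forall>i\<in>A. (\<Sum>j\<in>T. \<beta> i j) \<le> 1" using bf unfolding rect_feasible_def by blast
      have cc: "\<forall>j\<in>T. (\<Sum>i\<in>A. \<beta> i j) \<le> 1"
      proof
        fix j assume j: "j \<in> T"
        show "(\<Sum>i\<in>A. \<beta> i j) \<le> 1"
        proof (cases "j = P")
          case True then show ?thesis using bf unfolding rect_feasible_def by simp
        next
          case False then show ?thesis using bf j unfolding rect_feasible_def by blast
        qed
      qed
      have ee: "\<forall>i\<in>A. \<forall>j\<in>T. 0 \<le> \<beta> i j" using bf unfolding rect_feasible_def by blast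
      define s where "s = (\<lambda>i. 1 - (\<Sum>j\<in>T. \<beta> i j))"
      define d where "d = (\<lambda>j. 1 - (\<Sum>i\<in>A. \<beta> i j))"
      define S where "S = (\<Sum>i\<in>A. s i)"
      define tot where "tot = (\<Sum>i\<in>A. \<Sum>j\<in>T. \<beta> i j)"
      have tot2: "tot = (\<Sum>j\<in>T. \<Sum>i\<in>A. \<beta> i j)" unfolding tot_def by (rule sum.swap)
      have totle: "tot \<le> real (card T)"
      proof -
        have "tot \<le> (\<Sum>j\<in>T. (1::real))" unfolding tot2 using cc by (intro sum_mono) auto
        then show ?thesis by simp
      qed
      have Seq: "S = real (card A) - tot" unfolding S_def s_def tot_def by (simp add: sum_subtractf)
      have Dsum: "(\<Sum>j\<in>T. d j) = real (card T) - tot" unfolding d_def tot2 by (simp add: sum_subtractf)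
      have cATr: "real (card T) + 1 \<le> real (card A)" using cAT by linarith
      have Spos: "S > 0" using Seq totle cATr by linarith
      have DleS: "(\<Sum>j\<in>T. d j) \<le> S" using Seq Dsum cATr by linarith
      have s0: "\<forall>i\<in>A. s i \<ge> 0" using rr s_def by auto
      have d0: "\<forall>j\<in>T. d j \<ge> 0" using cc d_def by auto
      define \<beta>' where "\<beta>' = (\<lambda>i j. \<beta> i j + s i * d j / S)"
      have ge: "\<forall>i\<in>A. \<forall>j\<in>T. \<beta> i j \<le> \<beta>' i j"
        using s0 d0 Spos unfolding \<beta>'_def by auto
      have b'0: "\<forall>i\<in>A. \<forall>j\<in>T. 0 \<le> \<beta>' i j" using ge ee by fastforce
      have b'col: "\<forall>j\<in>T. (\<Sum>i\<in>A. \<beta>' i j) = 1"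
      proof
        fix j assume j: "j \<in> T"
        have "(\<Sum>i\<in>A. \<beta>' i j) = (\<Sum>i\<in>A. \<beta> i j) + (\<Sum>i\<in>A. s i) * d j / S"
          unfolding \<beta>'_def by (simp add: sum.distrib sum_divide_distrib sum_distrib_right)
        also have "\<dots> = (\<Sum>i\<in>A. \<beta> i j) + d j" using Spos S_def by simp
        finally show "(\<Sum>i\<in>A. \<beta>' i j) = 1" using d_def by simp
      qed
      have b'row: "\<forall>i\<in>A. (\<Sum>j\<in>T. \<beta>' i j) \<le> 1"
      proof
        fix i assume i: "i \<in> A"
        have "(\<Sum>j\<in>T. \<beta>' i j) = (\<Sum>j\<in>T. \<beta> i j) + s i * ((\<Sum>j\<in>T. d j) / S)"
          unfolding \<beta>'_def by (simp add: sum.distrib sum_divide_distrib sum_distrib_left)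
        also have "s i * ((\<Sum>j\<in>T. d j) / S) \<le> s i * 1"
          using s0 i DleS Spos by (intro mult_left_mono) auto
        finally show "(\<Sum>j\<in>T. \<beta>' i j) \<le> 1" using s_def by simp
      qed
      define s' where "s' = (\<lambda>i. 1 - (\<Sum>j\<in>T. \<beta>' i j))"
      have s'01: "\<forall>i\<in>A. 0 \<le> s' i \<and> s' i \<le> 1"
      proof
        fix i assume i: "i \<in> A"
        have "0 \<le> (\<Sum>j\<in>T. \<beta>' i j)" using b'0 i by (intro sum_nonneg) auto
        then show "0 \<le> s' i \<and> s' i \<le> 1" using b'row i s'_def by auto
      qed
      have Kr: "real K = real (card A) - real (card T)" using K_def cAT by (simp add: of_nat_diff)
      have Kpos': "real K > 0" using Kpos by simp
      have s'sum: "(\<Sum>i\<in>A. s' i) = real K"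
      proof -
        have "(\<Sum>i\<in>A. s' i) = real (card A) - (\<Sum>i\<in>A. \<Sum>j\<in>T. \<beta>' i j)"
          unfolding s'_def by (simp add: sum_subtractf)
        also have "(\<Sum>i\<in>A. \<Sum>j\<in>T. \<beta>' i j) = (\<Sum>j\<in>T. \<Sum>i\<in>A. \<beta>' i j)" by (rule sum.swap)
        also have "\<dots> = (\<Sum>j\<in>T. (1::real))" using b'col by (intro sum.cong) auto
        finally show ?thesis using Kr by simp
      qed
      define \<alpha>' :: "'a \<Rightarrow> 't + nat \<Rightarrow> real" where "\<alpha>' = (\<lambda>i c. case c of Inl j \<Rightarrow> \<beta>' i j | Inr k \<Rightarrow> s' i / real K)"
      have a'feas: "aug_feasible A T K \<alpha>'"
      proof -
        have rows: "\<forall>i\<in>A. (\<Sum>c\<in>aug_cols T K. \<alpha>' i c) = 1"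
        proof
          fix i assume i: "i \<in> A"
          have "(\<Sum>c\<in>aug_cols T K. \<alpha>' i c) = (\<Sum>j\<in>T. \<beta>' i j) + real K * (s' i / real K)"
            by (simp add: sum_aug_cols[OF fT] \<alpha>'_def)
          also have "\<dots> = (\<Sum>j\<in>T. \<beta>' i j) + s' i" using Kpos' by simp
          finally show "(\<Sum>c\<in>aug_cols T K. \<alpha>' i c) = 1" using s'_def by simp
        qed
        have cols: "\<forall>c\<in>aug_cols T K. (\<Sum>i\<in>A. \<alpha>' i c) = 1"
        proof
          fix c assume c: "c \<in> aug_cols T K"
          then consider (l) j where "c = Inl j" "j \<in> T" | (r) k where "c = Inr k" "k < K"
            unfolding aug_cols_def by auto
          then show "(\<Sum>i\<in>A. \<alpha>' i c) = 1"
          proof cases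
            case l then show ?thesis using b'col by (simp add: \<alpha>'_def)
          next
            case r
            have "(\<Sum>i\<in>A. \<alpha>' i c) = (\<Sum>i\<in>A. s' i) / real K"
              using r by (simp add: \<alpha>'_def sum_divide_distrib)
            then show ?thesis using s'sum Kpos' by simp
          qed
        qed
        have ents: "\<forall>i\<in>A. \<forall>c\<in>aug_cols T K. 0 \<le> \<alpha>' i c \<and> \<alpha>' i c \<le> 1"
        proof (intro ballI)
          fix i c assume i: "i \<in> A" and c: "c \<in> aug_cols T K"
          then consider (l) j where "c = Inl j" "j \<in> T" | (r) k where "c = Inr k" "k < K"
            unfolding aug_cols_def by auto
          then show "0 \<le> \<alpha>' i c \<and> \<alpha>' i c \<le> 1"
          proof cases
            case l
            have "\<beta>' i j \<le> (\<Sum>i'\<in>A. \<beta>' i' j)"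
              using b'0 l i fA by (intro member_le_sum) auto
            then show ?thesis using l b'col b'0 i by (simp add: \<alpha>'_def)
          next
            case r
            have K1: "real K \<ge> 1" using Kpos by simp
            have "s' i \<le> real K" using s'01 i K1 by force
            then have "s' i / real K \<le> 1" using Kpos' by (simp add: divide_le_eq)
            then show ?thesis using r s'01 i Kpos' by (simp add: \<alpha>'_def)
          qed
        qed
        show ?thesis unfolding aug_feasible_def using rows cols ents by blast
      qed
      have "RO (\<lambda>i j. \<alpha>' i (Inl j)) \<le> opt" by (rule vbound[OF a'feas])
      moreover have "(\<lambda>i j. \<alpha>' i (Inl j)) = \<beta>'" unfolding \<alpha>'_def by simp
      moreover have "RO \<beta> \<le> RO \<beta>'"
        unfolding RO_def rect_objective_def
      proof (intro sum_mono)
        fix i j assume i: "i \<in> A" and j: "j \<in> T"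
        have "weight eps (q j) (x i) > 0" unfolding weight_def using epos
          by (simp add: add_nonneg_pos)
        then show "weight eps (q j) (x i) * \<beta> i j \<le> weight eps (q j) (x i) * \<beta>' i j"
          using ge i j by (intro mult_left_mono) auto
      qed
      ultimately show ?thesis by simp
    qed
    show "rect_optimal eps A T P x q (\<lambda>i j. \<alpha> i (Inl j))"
      unfolding rect_optimal_def using rfeas rbound Ropt RO_def by auto
  qed
qed

end
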